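(* Let $R\colon\mathbb R^d\to\mathbb R$, $R(\mathbf x)=\sum_{i=1}^p\psi_i(\mathbf w_i^T\mathbf x)$ with $\mathbf w_i\in\mathbb R^d$ and convex $\psi_i\in C^{1,1}(\mathbb R)$, let $L=\mathrm{Lip}(\nabla R)$, $\lambda\ge0$, and $t\ge1$ an integer. For $\mathbf y\in\mathbb R^d$ define $\mathbf x_0=\mathbf y$ and $\mathbf x_{k+1}=\mathbf x_k-\alpha\bigl((\mathbf x_k-\mathbf y)+\lambda\nabla R(\mathbf x_k)\bigr)$, and let the $t$-step denoiser be the map $\mathbf y\mapsto\mathbf x_t$. If $\alpha\in[0,2/(2+\lambda L)]$, then the $t$-step denoiser is averaged.
   Context: A map $\mathbf D\colon\mathbb R^d\to\mathbb R^d$ is averaged if $\mathbf D=\beta\mathbf N+(1-\beta)\mathbf{Id}$ for some $\beta\in(0,1)$ and some nonexpansive (1-Lipschitz) map $\mathbf N\colon\mathbb R^d\to\mathbb R^d$. $C^{1,1}(\mathbb R)$ is the set of differentiable functions with Lipschitz-continuous derivative. *)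

theory Defs
  imports "HOL-Analysis.Analysis"
begin

definition averaged :: "('a::real_normed_vector \<Rightarrow> 'a) \<Rightarrow> bool" where
  "averaged D \<longleftrightarrow> (\<exists>\<beta>::real. 0 < \<beta> \<and> \<beta> < 1 \<and>
     (\<exists>N. (\<forall>x y. norm (N x - N y) \<le> norm (x - y)) \<and>
          (\<forall>x. D x = \<beta> *\<^sub>R N x + (1 - \<beta>) *\<^sub>R x)))"

definition Lip :: "('a::metric_space \<Rightarrow> 'b::metric_space) \<Rightarrow> real" where
  "Lip f = Inf {C. C-lipschitz_on UNIV f}"

primrec denoise_iter ::
  "real \<Rightarrow> real \<Rightarrow> ('a::real_normed_vector \<Rightarrow> 'a) \<Rightarrow> nat \<Rightarrow> 'a \<Rightarrow> 'a" where
  "denoise_iter \<alpha> lam G 0 y = y"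
| "denoise_iter \<alpha> lam G (Suc k) y =
     (let x = denoise_iter \<alpha> lam G k y in x - \<alpha> *\<^sub>R ((x - y) + lam *\<^sub>R G x))"

end

theory Submission
  imports Defs
begin



lemma descent:
  fixes f :: "'a::real_inner \<Rightarrow> real" and g :: "'a \<Rightarrow> 'a"
  assumes der: "\<And>x. (f has_derivative (\<lambda>h. g x \<bullet> h)) (at x)"
    and lip: "\<And>x y. norm (g x - g y) \<le> L * norm (x - y)"
  shows "f v \<le> f u + g u \<bullet> (v - u) + L / 2 * (norm (v - u))^2"
proof -
  define d where "d = v - u"
  define k where "k s = f (u + s *\<^sub>R d) - f u - s * (g u \<bullet> d) - L / 2 * s^2 * (norm d)^2" for s
  have dk: "(k has_real_derivative (g (u + s *\<^sub>R d) \<bullet> d - g u \<bullet> d - L * s * (norm d)^2)) (at s)" for s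
  proof -
    have l0: "((\<lambda>s. s *\<^sub>R d) has_derivative (\<lambda>h. h *\<^sub>R d)) (at s)"
      by (rule bounded_linear_imp_has_derivative[OF bounded_linear_scaleR_left])
    have l: "((\<lambda>s. u + s *\<^sub>R d) has_derivative (\<lambda>h. 0 + h *\<^sub>R d)) (at s)"
      by (rule has_derivative_add[OF has_derivative_const l0])
    have F0: "((\<lambda>s. f (u + s *\<^sub>R d)) has_derivative (\<lambda>h. g (u + s *\<^sub>R d) \<bullet> (0 + h *\<^sub>R d))) (at s)"
      by (rule has_derivative_compose[OF l der])
    have ee: "(\<lambda>h. g (u + s *\<^sub>R d) \<bullet> (0 + h *\<^sub>R d)) = (*) (g (u + s *\<^sub>R d) \<bullet> d)"
    proof
      fix h :: real
      show "g (u + s *\<^sub>R d) \<bullet> (0 + h *\<^sub>R d) = (g (u + s *\<^sub>R d) \<bullet> d) * h"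
        by (simp only: add_0_left inner_scaleR_right mult.commute)
    qed
    have F: "((\<lambda>s. f (u + s *\<^sub>R d)) has_real_derivative (g (u + s *\<^sub>R d) \<bullet> d)) (at s)"
      unfolding has_field_derivative_def using F0 unfolding ee .
    have "((\<lambda>s. f (u + s *\<^sub>R d) - f u - s * (g u \<bullet> d) - L / 2 * s^2 * (norm d)^2) has_real_derivative
        (g (u + s *\<^sub>R d) \<bullet> d - 0 - 1 * (g u \<bullet> d) - L / 2 * (real 2 * s ^ (2 - Suc 0)) * (norm d)^2)) (at s)"
      by (intro DERIV_diff F DERIV_const DERIV_cmult_right DERIV_cmult DERIV_ident DERIV_pow)
    then have "(k has_real_derivative
        (g (u + s *\<^sub>R d) \<bullet> d - 0 - 1 * (g u \<bullet> d) - L / 2 * (real 2 * s ^ (2 - Suc 0)) * (norm d)^2)) (at s)"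
      unfolding k_def .
    then show ?thesis by (rule DERIV_cong) simp
  qed
  have nonpos: "g (u + s *\<^sub>R d) \<bullet> d - g u \<bullet> d - L * s * (norm d)^2 \<le> 0" if "0 \<le> s" for s
  proof -
    have "g (u + s *\<^sub>R d) \<bullet> d - g u \<bullet> d = (g (u + s *\<^sub>R d) - g u) \<bullet> d"
      by (simp add: inner_diff_left)
    also have "\<dots> \<le> norm (g (u + s *\<^sub>R d) - g u) * norm d"
      by (rule norm_cauchy_schwarz)
    also have "\<dots> \<le> (L * norm (s *\<^sub>R d)) * norm d"
      using lip[of "u + s *\<^sub>R d" u] by (intro mult_right_mono) auto
    also have "\<dots> = L * s * (norm d)^2" using that by (simp add: power2_eq_square)
    finally show ?thesis by simp
  qed
  have "k 1 \<le> k 0"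
  proof (rule DERIV_nonpos_imp_nonincreasing[of 0 1 k])
    fix x :: real assume "0 \<le> x" "x \<le> 1"
    then show "\<exists>y. (k has_real_derivative y) (at x) \<and> y \<le> 0"
      using dk[of x] nonpos[of x] by blast
  qed simp
  then show ?thesis by (simp add: k_def d_def)
qed


lemma cocoercive:
  fixes f :: "'a::real_inner \<Rightarrow> real" and g :: "'a \<Rightarrow> 'a"
  assumes der: "\<And>x. (f has_derivative (\<lambda>h. g x \<bullet> h)) (at x)"
    and lip: "\<And>x y. norm (g x - g y) \<le> L * norm (x - y)"
    and tan: "\<And>u v. f v \<ge> f u + g u \<bullet> (v - u)"
    and L: "L > 0"
  shows "(norm (g z - g x))^2 \<le> L * ((g z - g x) \<bullet> (z - x))"
proof -
  have half: "f z \<ge> f x + g x \<bullet> (z - x) + (norm (g z - g x))^2 / (2 * L)" for x z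
  proof -
    define q where "q = g z - g x"
    define v where "v = z - (1 / L) *\<^sub>R q"
    have A: "f v \<le> f z + g z \<bullet> (v - z) + L / 2 * (norm (v - z))^2" by (rule descent[OF der lip])
    have B: "f v \<ge> f x + g x \<bullet> (v - x)" by (rule tan)
    have vz: "v - z = - (1 / L) *\<^sub>R q" by (simp add: v_def)
    have vx: "v - x = (z - x) - (1 / L) *\<^sub>R q" by (simp add: v_def)
    define Q where "Q = (norm q)^2 / (2 * L)"
    have n: "L / 2 * (norm (v - z))^2 = Q"
      using L by (simp add: vz Q_def power2_eq_square field_simps)
    have "g z \<bullet> (v - z) - g x \<bullet> (v - x) = - (g x \<bullet> (z - x)) - (1/L) * (norm q)^2"
      by (simp add: vz vx q_def inner_diff_left inner_diff_right algebra_simps power2_norm_eq_inner)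
    moreover have "(1/L) * (norm q)^2 = 2 * Q" using L by (simp add: Q_def)
    ultimately have E: "g z \<bullet> (v - z) - g x \<bullet> (v - x) = - (g x \<bullet> (z - x)) - 2 * Q" by simp
    have "f x + g x \<bullet> (z - x) + Q \<le> f z" using A B n E by linarith
    then show ?thesis by (simp add: Q_def q_def)
  qed
  have "(norm (g z - g x))^2 = (norm (g x - g z))^2" by (simp add: norm_minus_commute)
  then have "(norm (g z - g x))^2 / L \<le> g z \<bullet> (z - x) - g x \<bullet> (z - x)"
    using half[of x z] half[of z x] L by (simp add: inner_diff_right field_simps)
  then show ?thesis using L by (simp add: inner_diff_left field_simps)
qed



lemma Lip_works:
  fixes f :: "'a::metric_space \<Rightarrow> 'b::metric_space"
  assumes "C-lipschitz_on UNIV f"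
  shows "0 \<le> Lip f" "\<And>x y. dist (f x) (f y) \<le> Lip f * dist x y"
proof -
  let ?S = "{C. C-lipschitz_on UNIV f}"
  have ne: "?S \<noteq> {}" using assms by auto
  show "0 \<le> Lip f" unfolding Lip_def
    by (rule cInf_greatest[OF ne]) (auto simp: lipschitz_on_def)
  fix x y
  show "dist (f x) (f y) \<le> Lip f * dist x y"
  proof (cases "x = y")
    case True then show ?thesis by simp
  next
    case False
    then have d: "dist x y > 0" by simp
    have "dist (f x) (f y) / dist x y \<le> Lip f" unfolding Lip_def
    proof (rule cInf_greatest[OF ne])
      fix C assume "C \<in> ?S"
      then have "dist (f x) (f y) \<le> C * dist x y" by (auto simp: lipschitz_on_def)
      then show "dist (f x) (f y) / dist x y \<le> C" using d by (simp add: divide_le_eq)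
    qed
    then show ?thesis using d by (simp add: divide_le_eq mult.commute)
  qed
qed


theorem proposition6:
  fixes w :: "nat \<Rightarrow> real ^ 'd"
    and \<psi> \<psi>' :: "nat \<Rightarrow> real \<Rightarrow> real"
    and p t :: nat and lam \<alpha> :: real
    and R :: "real ^ 'd \<Rightarrow> real" and gradR :: "real ^ 'd \<Rightarrow> real ^ 'd"
  assumes R_def: "\<And>x. R x = (\<Sum>i=1..p. \<psi> i (w i \<bullet> x))"
    and convex: "\<And>i. i \<in> {1..p} \<Longrightarrow> convex_on UNIV (\<psi> i)"
    and deriv: "\<And>i s. i \<in> {1..p} \<Longrightarrow> (\<psi> i has_real_derivative \<psi>' i s) (at s)"
    and C11: "\<And>i. i \<in> {1..p} \<Longrightarrow> \<exists>K. K-lipschitz_on UNIV (\<psi>' i)"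
    and gradR: "\<And>x. (R has_derivative (\<lambda>h. gradR x \<bullet> h)) (at x)"
    and lam: "lam \<ge> 0"
    and t: "t \<ge> 1"
    and alpha: "0 \<le> \<alpha>" "\<alpha> \<le> 2 / (2 + lam * Lip gradR)"
  shows "averaged (denoise_iter \<alpha> lam gradR t)"
proof -
  have Rf: "R = (\<lambda>x. \<Sum>i=1..p. \<psi> i (w i \<bullet> x))" using R_def by auto
  have comp_der: "((\<lambda>x. \<psi> i (w i \<bullet> x)) has_derivative (\<lambda>h. \<psi>' i (w i \<bullet> x) * (w i \<bullet> h))) (at x)"
    if i: "i \<in> {1..p}" for i x
  proof -
    have l: "((\<lambda>x. w i \<bullet> x) has_derivative (\<lambda>h. w i \<bullet> h)) (at x)"
      by (auto intro!: derivative_eq_intros)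
    have "(\<psi> i has_derivative (*) (\<psi>' i (w i \<bullet> x))) (at (w i \<bullet> x))"
      using deriv[OF i, of "w i \<bullet> x"] by (simp only: has_field_derivative_def)
    from has_derivative_compose[OF l this] show ?thesis .
  qed
  have grad_eq: "gradR x = (\<Sum>i=1..p. \<psi>' i (w i \<bullet> x) *\<^sub>R w i)" for x
  proof -
    have dR: "(R has_derivative (\<lambda>h. \<Sum>i=1..p. \<psi>' i (w i \<bullet> x) * (w i \<bullet> h))) (at x)"
      unfolding Rf by (rule has_derivative_sum) (use comp_der in auto)
    have e: "(\<lambda>h. gradR x \<bullet> h) = (\<lambda>h. \<Sum>i=1..p. \<psi>' i (w i \<bullet> x) * (w i \<bullet> h))"
      by (rule has_derivative_unique[OF gradR dR])
    have "\<forall>h. gradR x \<bullet> h = (\<Sum>i=1..p. \<psi>' i (w i \<bullet> x) *\<^sub>R w i) \<bullet> h"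
    proof
      fix h
      show "gradR x \<bullet> h = (\<Sum>i=1..p. \<psi>' i (w i \<bullet> x) *\<^sub>R w i) \<bullet> h"
        using fun_cong[OF e, of h] by (simp only: inner_sum_left inner_scaleR_left)
    qed
    then show ?thesis using vector_eq_rdot by blast
  qed
  obtain K where K: "\<And>i. i \<in> {1..p} \<Longrightarrow> (K i)-lipschitz_on UNIV (\<psi>' i)"
  proof -
    have "\<forall>i\<in>{1..p}. \<exists>K. K-lipschitz_on UNIV (\<psi>' i)" using C11 by blast
    then obtain K where "\<forall>i\<in>{1..p}. (K i)-lipschitz_on UNIV (\<psi>' i)" by (rule bchoice[elim_format]) blast
    then show ?thesis using that by blast
  qed
  have gl: "dist (gradR x) (gradR y) \<le> (\<Sum>i=1..p. K i * (norm (w i))^2) * dist x y" for x y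
  proof -
    have "dist (gradR x) (gradR y) = norm (\<Sum>i=1..p. (\<psi>' i (w i \<bullet> x) - \<psi>' i (w i \<bullet> y)) *\<^sub>R w i)"
      by (simp add: dist_norm grad_eq sum_subtractf scaleR_diff_left)
    also have "\<dots> \<le> (\<Sum>i=1..p. norm ((\<psi>' i (w i \<bullet> x) - \<psi>' i (w i \<bullet> y)) *\<^sub>R w i))"
      by (rule norm_sum)
    also have "\<dots> \<le> (\<Sum>i=1..p. K i * (norm (w i))^2 * dist x y)"
    proof (rule sum_mono)
      fix i assume i: "i \<in> {1..p}"
      have "\<bar>\<psi>' i (w i \<bullet> x) - \<psi>' i (w i \<bullet> y)\<bar> \<le> K i * \<bar>w i \<bullet> x - w i \<bullet> y\<bar>"
        using K[OF i] by (auto simp: lipschitz_on_def dist_real_def)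
      also have "\<dots> \<le> K i * (norm (w i) * dist x y)"
      proof -
        have "\<bar>w i \<bullet> x - w i \<bullet> y\<bar> = \<bar>w i \<bullet> (x - y)\<bar>" by (simp add: inner_diff_right)
        also have "\<dots> \<le> norm (w i) * norm (x - y)" by (rule Cauchy_Schwarz_ineq2)
        finally show ?thesis using K[OF i] by (intro mult_left_mono) (auto simp: lipschitz_on_def dist_norm)
      qed
      finally have "norm ((\<psi>' i (w i \<bullet> x) - \<psi>' i (w i \<bullet> y)) *\<^sub>R w i) \<le> K i * (norm (w i) * dist x y) * norm (w i)"
        by (simp add: mult_right_mono)
      then show "norm ((\<psi>' i (w i \<bullet> x) - \<psi>' i (w i \<bullet> y)) *\<^sub>R w i) \<le> K i * (norm (w i))^2 * dist x y"
        by (simp add: power2_eq_square algebra_simps)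
    qed
    also have "\<dots> = (\<Sum>i=1..p. K i * (norm (w i))^2) * dist x y" by (simp add: sum_distrib_right)
    finally show ?thesis .
  qed
  have "(\<Sum>i=1..p. K i * (norm (w i))^2) -lipschitz_on UNIV gradR"
    unfolding lipschitz_on_def using gl K by (auto intro!: sum_nonneg simp: lipschitz_on_def)
  note LW = Lip_works[OF this]
  define L where "L = Lip gradR"
  have L0: "L \<ge> 0" using LW L_def by simp
  have Lg: "norm (gradR x - gradR y) \<le> L * norm (x - y)" for x y
    using LW(2)[of x y] by (simp add: L_def dist_norm)
  have tan: "R v \<ge> R u + gradR u \<bullet> (v - u)" for u v
  proof -
    have "gradR u \<bullet> (v - u) = (\<Sum>i=1..p. \<psi>' i (w i \<bullet> u) * (w i \<bullet> v - w i \<bullet> u))"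
      by (simp add: grad_eq inner_sum_left inner_diff_right right_diff_distrib sum_subtractf)
    also have "\<dots> \<le> (\<Sum>i=1..p. \<psi> i (w i \<bullet> v) - \<psi> i (w i \<bullet> u))"
    proof (rule sum_mono)
      fix i assume i: "i \<in> {1..p}"
      show "\<psi>' i (w i \<bullet> u) * (w i \<bullet> v - w i \<bullet> u) \<le> \<psi> i (w i \<bullet> v) - \<psi> i (w i \<bullet> u)"
        by (rule convex_on_imp_above_tangent[OF convex[OF i]]) (use deriv[OF i] in auto)
    qed
    finally show ?thesis by (simp add: R_def sum_subtractf)
  qed
  have coco: "(norm (gradR x - gradR y))^2 \<le> L * ((gradR x - gradR y) \<bullet> (x - y))" for x y
  proof (cases "L = 0")
    case True
    then show ?thesis using Lg[of x y] by simp
  next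
    case False
    then show ?thesis using cocoercive[OF gradR Lg tan] L0 by simp
  qed
  have a1: "\<alpha> * (2 + lam * L) \<le> 2"
  proof -
    have "0 < 2 + lam * L" using L0 lam by (smt (verit) mult_nonneg_nonneg)
    then show ?thesis using alpha(2) by (simp add: L_def le_divide_eq)
  qed
  have "\<alpha> * 2 \<le> \<alpha> * (2 + lam * L)" using alpha(1) L0 lam by (intro mult_left_mono) auto
  then have a1': "\<alpha> \<le> 1" using a1 by linarith
  define S where "S x = (1 - \<alpha>) *\<^sub>R x - (\<alpha> * lam) *\<^sub>R gradR x" for x
  have Sc: "norm (S x - S y) \<le> (1 - \<alpha>) * norm (x - y)" for x y
  proof -
    define a where "a = x - y"
    define g where "g = gradR x - gradR y"
    have Sd: "S x - S y = (1 - \<alpha>) *\<^sub>R a - (\<alpha> * lam) *\<^sub>R g"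
      by (simp add: S_def a_def g_def algebra_simps)
    have cg: "(norm g)^2 \<le> L * (g \<bullet> a)" using coco[of x y] by (simp add: a_def g_def)
    have ga: "g \<bullet> a \<ge> 0"
    proof (cases "L = 0")
      case True
      then have "g = 0" using Lg[of x y] by (simp add: g_def)
      then show ?thesis by simp
    next
      case False
      then have "L > 0" using L0 by simp
      moreover have "0 \<le> L * (g \<bullet> a)" using cg by (smt (verit) zero_le_power2)
      ultimately show ?thesis by (simp add: zero_le_mult_iff)
    qed
    have "(norm (S x - S y))^2 = (1 - \<alpha>)^2 * (norm a)^2 - 2 * (1 - \<alpha>) * (\<alpha> * lam) * (g \<bullet> a) + (\<alpha> * lam)^2 * (norm g)^2"
    proof -
      have gen: "(norm (c *\<^sub>R a - e *\<^sub>R g))^2 = c^2 * (a \<bullet> a) - 2 * c * e * (g \<bullet> a) + e^2 * (g \<bullet> g)"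
        for c e :: real
        unfolding power2_norm_eq_inner by (simp add: inner_diff_left inner_diff_right inner_commute power2_eq_square algebra_simps)
      show ?thesis unfolding Sd gen by (simp add: power2_norm_eq_inner)
    qed
    also have "\<dots> \<le> (1 - \<alpha>)^2 * (norm a)^2"
    proof -
      have "(\<alpha> * lam)^2 * (norm g)^2 \<le> (\<alpha> * lam)^2 * (L * (g \<bullet> a))"
        using cg by (intro mult_left_mono) auto
      also have "\<dots> = (\<alpha> * lam) * (\<alpha> * lam * L) * (g \<bullet> a)" by (simp add: power2_eq_square)
      also have "\<dots> \<le> (\<alpha> * lam) * (2 * (1 - \<alpha>)) * (g \<bullet> a)"
        using a1 alpha lam ga by (intro mult_right_mono mult_left_mono) (auto simp: algebra_simps)
      finally show ?thesis by (simp add: algebra_simps)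
    qed
    finally have "(norm (S x - S y))^2 \<le> ((1 - \<alpha>) * norm a)^2" by (simp add: power_mult_distrib)
    then show ?thesis using a1' by (simp add: a_def power2_le_iff_abs_le)
  qed
  define D where "D = denoise_iter \<alpha> lam gradR"
  have step: "D (Suc k) y = S (D k y) + \<alpha> *\<^sub>R y" for k y
    by (simp add: D_def S_def Let_def algebra_simps)
  have nexp: "norm (D k u - D k v) \<le> norm (u - v)" for k u v
  proof (induction k)
    case 0 then show ?case by (simp add: D_def)
  next
    case (Suc k)
    have "D (Suc k) u - D (Suc k) v = (S (D k u) - S (D k v)) + \<alpha> *\<^sub>R (u - v)"
      by (simp add: step algebra_simps)
    also have "norm \<dots> \<le> norm (S (D k u) - S (D k v)) + norm (\<alpha> *\<^sub>R (u - v))"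
      by (rule norm_triangle_ineq)
    also have "\<dots> \<le> (1 - \<alpha>) * norm (u - v) + \<alpha> * norm (u - v)"
    proof (rule add_mono)
      have "(1 - \<alpha>) * norm (D k u - D k v) \<le> (1 - \<alpha>) * norm (u - v)"
        using Suc.IH a1' by (intro mult_left_mono) auto
      then show "norm (S (D k u) - S (D k v)) \<le> (1 - \<alpha>) * norm (u - v)"
        using Sc[of "D k u" "D k v"] by linarith
    qed (use alpha in simp)
    finally show ?case by (simp add: algebra_simps)
  qed
  obtain k where k: "t = Suc k" using t by (cases t) auto
  show ?thesis
  proof (cases "\<alpha> = 0")
    case True
    have Did: "denoise_iter \<alpha> lam gradR n y = y" for n y
      by (induction n) (simp_all add: True)
    have c1: "\<forall>x y. norm (id x - id y) \<le> norm (x - y)" by simp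
    have c2: "\<forall>x. denoise_iter \<alpha> lam gradR t x = (1/2::real) *\<^sub>R id x + (1 - 1/2) *\<^sub>R x"
    proof
      fix x :: "real ^ 'd"
      have hx: "(1/2::real) *\<^sub>R x + (1 - 1/2) *\<^sub>R x = x"
        by (simp only: scaleR_add_left[symmetric]) simp
      show "denoise_iter \<alpha> lam gradR t x = (1/2::real) *\<^sub>R id x + (1 - 1/2) *\<^sub>R x"
        unfolding Did id_def by (rule hx[symmetric])
    qed
    show ?thesis unfolding averaged_def
      apply (rule exI[of _ "1/2::real"])
      apply (rule conjI, simp)
      apply (rule conjI, simp)
      apply (rule exI[of _ id])
      by (rule conjI[OF c1 c2])
  next
    case False
    have ap: "\<alpha> > 0" using alpha(1) False by linarith
    define \<beta> where "\<beta> = 1 - \<alpha> / 2"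
    have b: "0 < \<beta>" "\<beta> < 1" using ap a1' by (auto simp: \<beta>_def)
    define N where "N x = (1 / \<beta>) *\<^sub>R (S (D k x) + (\<alpha> / 2) *\<^sub>R x)" for x
    have Nn: "norm (N x - N y) \<le> norm (x - y)" for x y
    proof -
      have "N x - N y = (1 / \<beta>) *\<^sub>R ((S (D k x) - S (D k y)) + (\<alpha> / 2) *\<^sub>R (x - y))"
        by (simp add: N_def algebra_simps)
      then have "norm (N x - N y) = (1 / \<beta>) * norm ((S (D k x) - S (D k y)) + (\<alpha> / 2) *\<^sub>R (x - y))"
        using b by simp
      also have "\<dots> \<le> (1 / \<beta>) * ((1 - \<alpha>) * norm (x - y) + (\<alpha> / 2) * norm (x - y))"
      proof (intro mult_left_mono)
        have "norm ((S (D k x) - S (D k y)) + (\<alpha> / 2) *\<^sub>R (x - y)) \<le> norm (S (D k x) - S (D k y)) + norm ((\<alpha> / 2) *\<^sub>R (x - y))"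
          by (rule norm_triangle_ineq)
        also have "\<dots> \<le> (1 - \<alpha>) * norm (x - y) + (\<alpha> / 2) * norm (x - y)"
        proof (rule add_mono)
          have "(1 - \<alpha>) * norm (D k x - D k y) \<le> (1 - \<alpha>) * norm (x - y)"
            using nexp[of k x y] a1' by (intro mult_left_mono) auto
          then show "norm (S (D k x) - S (D k y)) \<le> (1 - \<alpha>) * norm (x - y)"
            using Sc[of "D k x" "D k y"] by linarith
        qed (use ap in simp)
        finally show "norm ((S (D k x) - S (D k y)) + (\<alpha> / 2) *\<^sub>R (x - y)) \<le> (1 - \<alpha>) * norm (x - y) + (\<alpha> / 2) * norm (x - y)" .
      qed (use b in simp)
      also have "\<dots> = norm (x - y)" using b by (simp add: \<beta>_def field_simps)
      finally show ?thesis .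
    qed
    have Dt: "denoise_iter \<alpha> lam gradR t x = \<beta> *\<^sub>R N x + (1 - \<beta>) *\<^sub>R x" for x
    proof -
      have e1: "denoise_iter \<alpha> lam gradR t x = S (D k x) + \<alpha> *\<^sub>R x"
        unfolding k D_def[symmetric] by (rule step)
      have e2: "\<beta> *\<^sub>R N x = S (D k x) + (\<alpha> / 2) *\<^sub>R x"
        using b by (simp add: N_def)
      have e3: "(1 - \<beta>) *\<^sub>R x = (\<alpha> / 2) *\<^sub>R x" by (simp add: \<beta>_def)
      have e4: "(\<alpha> / 2) *\<^sub>R x + (\<alpha> / 2) *\<^sub>R x = \<alpha> *\<^sub>R x"
        by (simp only: scaleR_add_left[symmetric] field_sum_of_halves)
      show ?thesis unfolding e1 e2 e3 by (simp only: add.assoc e4)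
    qed
    have EN: "\<exists>N. (\<forall>x y. norm (N x - N y) \<le> norm (x - y)) \<and>
          (\<forall>x. denoise_iter \<alpha> lam gradR t x = \<beta> *\<^sub>R N x + (1 - \<beta>) *\<^sub>R x)"
    proof (rule exI[of _ N], rule conjI)
      show "\<forall>x y. norm (N x - N y) \<le> norm (x - y)" using Nn by blast
      show "\<forall>x. denoise_iter \<alpha> lam gradR t x = \<beta> *\<^sub>R N x + (1 - \<beta>) *\<^sub>R x" using Dt by blast
    qed
    show ?thesis unfolding averaged_def
    proof (rule exI[of _ \<beta>])
      show "0 < \<beta> \<and> \<beta> < 1 \<and> (\<exists>N. (\<forall>x y. norm (N x - N y) \<le> norm (x - y)) \<and>
          (\<forall>x. denoise_iter \<alpha> lam gradR t x = \<beta> *\<^sub>R N x + (1 - \<beta>) *\<^sub>R x))"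
        by (rule conjI[OF b(1) conjI[OF b(2) EN]])
    qed
  qed
qed

end
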